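(* Let $n\ge2$, $F_1,\dots,F_n:\mathbb{R}^d\to\mathbb{R}^d$ with each $F_i$ $L_i$-Lipschitz, $F=\frac1n\sum_iF_i$ $L$-Lipschitz, and $z_*$ with $F(z_* )=0$. Let $L_{max}=\max_iL_i$, $A=\frac2n\sum_iL_i^2$, $\sigma_*^2=\frac1n\sum_i\|F_i(z_* )\|^2$. Suppose the SEG-RR step sizes satisfy $\gamma_1\le\frac{1}{3\sqrt{2n(n-1)}L_{max}}$ and $\gamma_2\le\frac{1}{\sqrt{n(n-1)}L_{max}}$. Then for every epoch $k$ the SEG-RR iterates satisfy $$\mathbb{E}_k\Big[\frac1n\sum_{j=0}^{n-1}\|z_j^k-z_0^k\|^2\Big]\le\big[10n^2L^2+A(25+n)\big]\gamma_1^2\|z_0^k-z_*\|^2+2(n+25)\gamma_1^2\sigma_*^2.$$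
   Context: SEG-RR with step sizes $\gamma_1,\gamma_2>0$: for each epoch $k$, with current point $z_0^k$, draw a permutation $\pi^k$ of $\{1,\dots,n\}$ uniformly at random, independently of the past; for $i=0,\dots,n-1$ set $\bar z_i^k=z_i^k-\gamma_2F_{\pi_i^k}(z_i^k)$, $z_{i+1}^k=z_i^k-\gamma_1F_{\pi_i^k}(\bar z_i^k)$; then $z_0^{k+1}=z_n^k$. $\mathbb{E}_k$ denotes expectation over $\pi^k$ conditional on the history up to $z_0^k$. *)

theory Defs
  imports "HOL-Analysis.Analysis" "HOL-Combinatorics.Permutations"
begin

definition seg_step :: "(nat \<Rightarrow> 'a::real_normed_vector \<Rightarrow> 'a) \<Rightarrow> real \<Rightarrow> real \<Rightarrow> nat \<Rightarrow> 'a \<Rightarrow> 'a" where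
  "seg_step F \<gamma>1 \<gamma>2 i z = z - \<gamma>1 *\<^sub>R F i (z - \<gamma>2 *\<^sub>R F i z)"

fun seg_iter :: "(nat \<Rightarrow> 'a::real_normed_vector \<Rightarrow> 'a) \<Rightarrow> real \<Rightarrow> real \<Rightarrow> (nat \<Rightarrow> nat) \<Rightarrow> 'a \<Rightarrow> nat \<Rightarrow> 'a" where
  "seg_iter F \<gamma>1 \<gamma>2 \<pi> z0 0 = z0"
| "seg_iter F \<gamma>1 \<gamma>2 \<pi> z0 (Suc j) = seg_step F \<gamma>1 \<gamma>2 (\<pi> j) (seg_iter F \<gamma>1 \<gamma>2 \<pi> z0 j)"

end

theory Submission
  imports Defs
begin


lemma perm_sum1:
  fixes g :: "'b \<Rightarrow> real"
  assumes "finite S" "t \<in> S"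
  shows "(\<Sum>\<pi>\<in>{\<pi>. \<pi> permutes S}. g (\<pi> t)) = fact (card S - 1) * (\<Sum>b\<in>S. g b)"
proof -
  define S' where "S' = S - {t}"
  have SS: "S = insert t S'" "t \<notin> S'" "finite S'" using assms by (auto simp: S'_def)
  have "(\<Sum>\<pi>\<in>{\<pi>. \<pi> permutes S}. g (\<pi> t)) =
     (\<Sum>b\<in>S. \<Sum>q\<in>{p. p permutes S'}. g ((Transposition.transpose t b \<circ> q) t))"
    using sum_over_permutations_insert[OF SS(3) SS(2), of "\<lambda>\<pi>. g (\<pi> t)"] SS(1) by simp
  also have "\<dots> = (\<Sum>b\<in>S. \<Sum>q\<in>{p. p permutes S'}. g b)"
    apply (rule sum.cong[OF refl])+
    using SS(2) by (simp add: permutes_not_in)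
  also have "\<dots> = (\<Sum>b\<in>S. fact (card S') * g b)"
    using card_permutations[OF refl SS(3)] by simp
  also have "card S' = card S - 1" using assms by (simp add: S'_def)
  finally show ?thesis by (simp add: sum_distrib_left)
qed

lemma transpose_image_diff:
  assumes "t \<in> S" "b \<in> S"
  shows "Transposition.transpose t b ` (S - {t}) = S - {b}"
proof
  show "Transposition.transpose t b ` (S - {t}) \<subseteq> S - {b}"
    using assms by (auto simp: Transposition.transpose_def)
  show "S - {b} \<subseteq> Transposition.transpose t b ` (S - {t})"
  proof
    fix x assume x: "x \<in> S - {b}"
    have "Transposition.transpose t b (Transposition.transpose t b x) = x" by simp
    moreover have "Transposition.transpose t b x \<in> S - {t}" using x assms by (auto simp: Transposition.transpose_def)
    ultimately show "x \<in> Transposition.transpose t b ` (S - {t})" by (metis image_eqI)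
  qed
qed

lemma perm_sum2:
  fixes h :: "'b \<Rightarrow> 'b \<Rightarrow> real"
  assumes "finite S" "t \<in> S" "s \<in> S" "t \<noteq> s"
  shows "(\<Sum>\<pi>\<in>{\<pi>. \<pi> permutes S}. h (\<pi> t) (\<pi> s)) = fact (card S - 2) * (\<Sum>b\<in>S. \<Sum>k\<in>S-{b}. h b k)"
proof -
  define S' where "S' = S - {t}"
  have SS: "S = insert t S'" "t \<notin> S'" "finite S'" "s \<in> S'" using assms by (auto simp: S'_def)
  have "(\<Sum>\<pi>\<in>{\<pi>. \<pi> permutes S}. h (\<pi> t) (\<pi> s)) =
     (\<Sum>b\<in>S. \<Sum>q\<in>{p. p permutes S'}. h ((Transposition.transpose t b \<circ> q) t) ((Transposition.transpose t b \<circ> q) s))"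
    using sum_over_permutations_insert[OF SS(3) SS(2), of "\<lambda>\<pi>. h (\<pi> t) (\<pi> s)"] SS(1) by simp
  also have "\<dots> = (\<Sum>b\<in>S. \<Sum>q\<in>{p. p permutes S'}. h b (Transposition.transpose t b (q s)))"
    apply (rule sum.cong[OF refl])+
    using SS(2) by (simp add: permutes_not_in)
  also have "\<dots> = (\<Sum>b\<in>S. fact (card S' - 1) * (\<Sum>c\<in>S'. h b (Transposition.transpose t b c)))"
    apply (rule sum.cong[OF refl])
    using perm_sum1[OF SS(3) SS(4)] by simp
  also have "\<dots> = (\<Sum>b\<in>S. fact (card S' - 1) * (\<Sum>k\<in>S-{b}. h b k))"
  proof (rule sum.cong[OF refl])
    fix b assume b: "b \<in> S"
    have "(\<Sum>c\<in>S'. h b (Transposition.transpose t b c)) = (\<Sum>k\<in>Transposition.transpose t b ` S'. h b k)"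
      by (subst sum.reindex) (auto intro: inj_on_subset[OF Transposition.inj_transpose])
    also have "Transposition.transpose t b ` S' = S - {b}" unfolding S'_def by (rule transpose_image_diff[OF assms(2) b])
    finally show "fact (card S' - 1) * (\<Sum>c\<in>S'. h b (Transposition.transpose t b c)) = fact (card S' - 1) * (\<Sum>k\<in>S-{b}. h b k)" by simp
  qed
  also have "card S' - 1 = card S - 2" using assms by (simp add: S'_def)
  finally show ?thesis by (simp add: sum_distrib_left)
qed



lemma norm_sum_sq_expand:
  fixes v :: "nat \<Rightarrow> 'a::real_inner"
  shows "(norm (\<Sum>t<j. v t))\<^sup>2 = (\<Sum>t<j. \<Sum>s<j. inner (v t) (v s))"
  by (simp add: power2_norm_eq_inner inner_sum_left inner_sum_right) (rule sum.swap)

lemma perm_var: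
  fixes a :: "nat \<Rightarrow> 'a::real_inner"
  assumes n2: "n \<ge> 2" and jn: "j \<le> n"
  shows "(\<Sum>\<pi>\<in>{\<pi>. \<pi> permutes {..<n}}. (norm (\<Sum>t<j. a (\<pi> t)))\<^sup>2)
    = fact (n-1) * real j * (\<Sum>i<n. (norm (a i))\<^sup>2)
      + fact (n-2) * (real j * (real j - 1)) * ((norm (\<Sum>i<n. a i))\<^sup>2 - (\<Sum>i<n. (norm (a i))\<^sup>2))"
proof -
  define V where "V = (\<Sum>i<n. (norm (a i))\<^sup>2)"
  define A0 where "A0 = (norm (\<Sum>i<n. a i))\<^sup>2"
  have off: "(\<Sum>b<n. \<Sum>k\<in>{..<n}-{b}. inner (a b) (a k)) = A0 - V"
  proof -
    have "(\<Sum>b<n. \<Sum>k\<in>{..<n}-{b}. inner (a b) (a k)) = (\<Sum>b<n. (\<Sum>k<n. inner (a b) (a k)) - inner (a b) (a b))"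
      by (rule sum.cong[OF refl]) (simp add: sum_diff1)
    also have "\<dots> = A0 - V"
      unfolding A0_def norm_sum_sq_expand unfolding V_def power2_norm_eq_inner sum_subtractf by (rule refl)
    finally show ?thesis .
  qed
  have inner_eq: "(\<Sum>\<pi>\<in>{\<pi>. \<pi> permutes {..<n}}. inner (a (\<pi> t)) (a (\<pi> s)))
      = (if t = s then fact (n-1) * V else fact (n-2) * (A0 - V))" if "t < j" "s < j" for t s
  proof (cases "t = s")
    case True
    then show ?thesis using perm_sum1[of "{..<n}" t "\<lambda>b. inner (a b) (a b)"] that jn
      by (simp add: V_def power2_norm_eq_inner)
  next
    case False
    then show ?thesis using perm_sum2[of "{..<n}" t s "\<lambda>b k. inner (a b) (a k)"] that jn off
      by simp
  qed
  have "(\<Sum>\<pi>\<in>{\<pi>. \<pi> permutes {..<n}}. (norm (\<Sum>t<j. a (\<pi> t)))\<^sup>2)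
      = (\<Sum>t<j. \<Sum>s<j. \<Sum>\<pi>\<in>{\<pi>. \<pi> permutes {..<n}}. inner (a (\<pi> t)) (a (\<pi> s)))"
    unfolding norm_sum_sq_expand
    by (subst sum.swap, subst (2) sum.swap) (rule refl)
  also have "\<dots> = (\<Sum>t<j. \<Sum>s<j. (if t = s then fact (n-1) * V else fact (n-2) * (A0 - V)))"
    by (intro sum.cong refl inner_eq) auto
  also have "\<dots> = (\<Sum>t<j. fact (n-1) * V + (real j - 1) * (fact (n-2) * (A0 - V)))"
  proof (rule sum.cong[OF refl])
    fix t assume t: "t \<in> {..<j}"
    have "(\<Sum>s<j. (if t = s then fact (n-1) * V else fact (n-2) * (A0 - V)))
        = (\<Sum>s\<in>insert t ({..<j}-{t}). (if t = s then fact (n-1) * V else fact (n-2) * (A0 - V)))"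
      using t by (simp add: insert_absorb)
    also have "\<dots> = fact (n-1) * V + (\<Sum>s\<in>{..<j}-{t}. fact (n-2) * (A0 - V))"
      by (subst sum.insert) auto
    also have "\<dots> = fact (n-1) * V + (real j - 1) * (fact (n-2) * (A0 - V))"
      using t by (simp add: of_nat_diff)
    finally show "(\<Sum>s<j. (if t = s then fact (n-1) * V else fact (n-2) * (A0 - V))) = \<dots>" .
  qed
  also have "\<dots> = real j * (fact (n-1) * V + (real j - 1) * (fact (n-2) * (A0 - V)))" by simp
  finally show ?thesis unfolding V_def[symmetric] A0_def[symmetric] by (simp add: algebra_simps)
qed

lemma sum_j: "(\<Sum>j<n. real j) = real n * (real n - 1) / 2"
  by (induction n) (auto simp: field_simps)

lemma sum_jj: "(\<Sum>j<n. real j * (real j - 1)) = real n * (real n - 1) * (real n - 2) / 3"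
  by (induction n) (auto simp: field_simps)



lemma iter_eq:
  "seg_iter F \<gamma>1 \<gamma>2 \<pi> z0 j - z0 =
    - \<gamma>1 *\<^sub>R (\<Sum>t<j. F (\<pi> t) (seg_iter F \<gamma>1 \<gamma>2 \<pi> z0 t - \<gamma>2 *\<^sub>R F (\<pi> t) (seg_iter F \<gamma>1 \<gamma>2 \<pi> z0 t)))"
  by (induction j) (auto simp: seg_step_def algebra_simps scaleR_right_distrib)



lemma norm_sum_sq_le:
  fixes d :: "nat \<Rightarrow> 'a::real_normed_vector"
  shows "(norm (\<Sum>t<j. d t))\<^sup>2 \<le> real j * (\<Sum>t<j. (norm (d t))\<^sup>2)"
proof -
  have "norm (\<Sum>t<j. d t) \<le> (\<Sum>t<j. norm (d t))" by (rule norm_sum)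
  then have "(norm (\<Sum>t<j. d t))\<^sup>2 \<le> (\<Sum>t<j. norm (d t))\<^sup>2"
    by (simp add: power_mono)
  also have "\<dots> \<le> (\<Sum>t<j. (norm (d t))\<^sup>2) * card {..<j}" by (rule sum_squared_le_sum_of_squares)
  finally show ?thesis by (simp add: mult.commute)
qed

lemma sq_sum_le2: "(x + y)\<^sup>2 \<le> 2 * x\<^sup>2 + 2 * (y::real)\<^sup>2"
proof -
  have "0 \<le> (x - y)\<^sup>2" by simp
  then show ?thesis unfolding power2_diff power2_sum by linarith
qed

lemma norm_add_sq_le2:
  fixes x y :: "'a::real_normed_vector"
  shows "(norm (x + y))\<^sup>2 \<le> 2 * (norm x)\<^sup>2 + 2 * (norm y)\<^sup>2"
proof -
  have "(norm (x + y))\<^sup>2 \<le> (norm x + norm y)\<^sup>2"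
    by (simp add: power_mono norm_triangle_ineq)
  also have "\<dots> \<le> 2 * (norm x)\<^sup>2 + 2 * (norm y)\<^sup>2" by (rule sq_sum_le2)
  finally show ?thesis .
qed

lemma det_bound:
  fixes F :: "nat \<Rightarrow> 'a::real_normed_vector \<Rightarrow> 'a" and M \<gamma>1 \<gamma>2 :: real
  assumes n2: "n \<ge> 2"
    and Lip: "\<And>i x y. i < n \<Longrightarrow> norm (F i x - F i y) \<le> M * norm (x - y)"
    and M0: "M \<ge> 0"
    and perm: "\<pi> permutes {..<n}"
    and g1: "\<gamma>1 \<ge> 0" and g2: "\<gamma>2 \<ge> 0"
    and c1: "18 * (\<gamma>1\<^sup>2 * M\<^sup>2 * (real n * (real n - 1))) \<le> 1"
    and c2: "\<gamma>2\<^sup>2 * M\<^sup>2 * (real n * (real n - 1)) \<le> 1"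
  shows "(\<Sum>j<n. (norm (seg_iter F \<gamma>1 \<gamma>2 \<pi> z0 j - z0))\<^sup>2)
     \<le> 3 * \<gamma>1\<^sup>2 * (\<Sum>j<n. (norm (\<Sum>t<j. F (\<pi> t) z0))\<^sup>2) + 3 * \<gamma>1\<^sup>2 * (\<Sum>i<n. (norm (F i z0))\<^sup>2)"
proof -
  define z where "z = seg_iter F \<gamma>1 \<gamma>2 \<pi> z0"
  define e where "e t = z t - z0" for t
  define zb where "zb t = z t - \<gamma>2 *\<^sub>R F (\<pi> t) (z t)" for t
  define a where "a i = F i z0" for i
  define d where "d t = F (\<pi> t) (zb t) - a (\<pi> t)" for t
  define S where "S = (\<Sum>t<n. (norm (e t))\<^sup>2)"
  define V where "V = (\<Sum>i<n. (norm (a i))\<^sup>2)"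
  define P where "P = (\<Sum>j<n. (norm (\<Sum>t<j. a (\<pi> t)))\<^sup>2)"
  have pin: "\<pi> t < n" if "t < n" for t using permutes_in_image[OF perm, of t] that by simp
  have nn: "real n * (real n - 1) \<ge> 2"
  proof -
    have "real n \<ge> 2" using n2 by simp
    then have "real n * (real n - 1) \<ge> 2 * 1" by (intro mult_mono) auto
    then show ?thesis by simp
  qed
  have gM: "(\<gamma>2 * M)\<^sup>2 \<le> 1/2"
  proof -
    have "(\<gamma>2 * M)\<^sup>2 * 2 \<le> (\<gamma>2 * M)\<^sup>2 * (real n * (real n - 1))"
      by (intro mult_left_mono nn) simp
    also have "\<dots> \<le> 1" using c2 by (simp add: power_mult_distrib)
    finally show ?thesis by simp
  qed
  have dbound: "(norm (d t))\<^sup>2 \<le> 6 * M\<^sup>2 * (norm (e t))\<^sup>2 + 2 * M\<^sup>2 * \<gamma>2\<^sup>2 * (norm (a (\<pi> t)))\<^sup>2"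
    if "t < n" for t
  proof -
    have "norm (F (\<pi> t) (z t) - a (\<pi> t)) \<le> M * norm (e t)"
      using Lip[OF pin[OF that]] by (simp add: a_def e_def)
    have zbe: "zb t - z0 = e t - \<gamma>2 *\<^sub>R (F (\<pi> t) (z t) - a (\<pi> t)) - \<gamma>2 *\<^sub>R a (\<pi> t)"
      by (simp add: zb_def e_def algebra_simps)
    have "norm (zb t - z0) \<le> norm (e t) + \<gamma>2 * norm (F (\<pi> t) (z t) - a (\<pi> t)) + \<gamma>2 * norm (a (\<pi> t))"
    proof -
      have "norm (e t - \<gamma>2 *\<^sub>R (F (\<pi> t) (z t) - a (\<pi> t)) - \<gamma>2 *\<^sub>R a (\<pi> t))
          \<le> norm (e t - \<gamma>2 *\<^sub>R (F (\<pi> t) (z t) - a (\<pi> t))) + norm (\<gamma>2 *\<^sub>R a (\<pi> t))"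
        by (rule norm_triangle_ineq4)
      moreover have "norm (e t - \<gamma>2 *\<^sub>R (F (\<pi> t) (z t) - a (\<pi> t)))
          \<le> norm (e t) + norm (\<gamma>2 *\<^sub>R (F (\<pi> t) (z t) - a (\<pi> t)))"
        by (rule norm_triangle_ineq4)
      ultimately show ?thesis unfolding zbe using g2 by simp
    qed
    also have "\<dots> \<le> norm (e t) + \<gamma>2 * (M * norm (e t)) + \<gamma>2 * norm (a (\<pi> t))"
      using \<open>norm (F (\<pi> t) (z t) - a (\<pi> t)) \<le> M * norm (e t)\<close> g2 by (simp add: mult_left_mono)
    finally have zbb: "norm (zb t - z0) \<le> (1 + \<gamma>2 * M) * norm (e t) + \<gamma>2 * norm (a (\<pi> t))"
      by (simp add: algebra_simps)
    have "norm (d t) \<le> M * norm (zb t - z0)"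
      using Lip[OF pin[OF that]] by (simp add: d_def a_def)
    also have "\<dots> \<le> M * ((1 + \<gamma>2 * M) * norm (e t) + \<gamma>2 * norm (a (\<pi> t)))"
      using zbb M0 by (simp add: mult_left_mono)
    finally have "(norm (d t))\<^sup>2 \<le> (M * ((1 + \<gamma>2 * M) * norm (e t) + \<gamma>2 * norm (a (\<pi> t))))\<^sup>2"
      by (simp add: power_mono)
    also have "\<dots> = M\<^sup>2 * ((1 + \<gamma>2 * M) * norm (e t) + \<gamma>2 * norm (a (\<pi> t)))\<^sup>2"
      by (simp add: power_mult_distrib)
    also have "\<dots> \<le> M\<^sup>2 * (2 * ((1 + \<gamma>2 * M) * norm (e t))\<^sup>2 + 2 * (\<gamma>2 * norm (a (\<pi> t)))\<^sup>2)"
      by (intro mult_left_mono sq_sum_le2) simp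
    also have "\<dots> \<le> M\<^sup>2 * (2 * (3 * (norm (e t))\<^sup>2) + 2 * (\<gamma>2 * norm (a (\<pi> t)))\<^sup>2)"
    proof -
      have "(1 + \<gamma>2 * M)\<^sup>2 \<le> 2 * 1\<^sup>2 + 2 * (\<gamma>2 * M)\<^sup>2" by (rule sq_sum_le2)
      also have "\<dots> \<le> 3" using gM by simp
      finally have "(1 + \<gamma>2 * M)\<^sup>2 * (norm (e t))\<^sup>2 \<le> 3 * (norm (e t))\<^sup>2"
        by (intro mult_right_mono) auto
      then have "((1 + \<gamma>2 * M) * norm (e t))\<^sup>2 \<le> 3 * (norm (e t))\<^sup>2"
        by (simp add: power_mult_distrib)
      then show ?thesis by (intro mult_left_mono) auto
    qed
    also have "\<dots> = 6 * M\<^sup>2 * (norm (e t))\<^sup>2 + 2 * M\<^sup>2 * \<gamma>2\<^sup>2 * (norm (a (\<pi> t)))\<^sup>2"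
      by (simp add: power_mult_distrib algebra_simps)
    finally show ?thesis .
  qed
  have sumd: "(\<Sum>t<j. (norm (d t))\<^sup>2) \<le> 6 * M\<^sup>2 * S + 2 * M\<^sup>2 * \<gamma>2\<^sup>2 * V" if "j \<le> n" for j
  proof -
    have "(\<Sum>t<j. (norm (d t))\<^sup>2) \<le> (\<Sum>t<j. 6 * M\<^sup>2 * (norm (e t))\<^sup>2 + 2 * M\<^sup>2 * \<gamma>2\<^sup>2 * (norm (a (\<pi> t)))\<^sup>2)"
      using that by (intro sum_mono dbound) auto
    also have "\<dots> \<le> (\<Sum>t<n. 6 * M\<^sup>2 * (norm (e t))\<^sup>2 + 2 * M\<^sup>2 * \<gamma>2\<^sup>2 * (norm (a (\<pi> t)))\<^sup>2)"
      using that by (intro sum_mono2) auto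
    also have "\<dots> = 6 * M\<^sup>2 * S + 2 * M\<^sup>2 * \<gamma>2\<^sup>2 * (\<Sum>t<n. (norm (a (\<pi> t)))\<^sup>2)"
      by (simp add: S_def sum.distrib sum_distrib_left)
    also have "(\<Sum>t<n. (norm (a (\<pi> t)))\<^sup>2) = V"
      unfolding V_def using sum.permute[OF perm, of "\<lambda>i. (norm (a i))\<^sup>2"] by (simp add: comp_def)
    finally show ?thesis .
  qed
  have ebound: "(norm (e j))\<^sup>2 \<le> 2 * \<gamma>1\<^sup>2 * (norm (\<Sum>t<j. a (\<pi> t)))\<^sup>2
      + 2 * \<gamma>1\<^sup>2 * (real j * (6 * M\<^sup>2 * S + 2 * M\<^sup>2 * \<gamma>2\<^sup>2 * V))" if "j \<le> n" for j
  proof -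
    have "e j = - \<gamma>1 *\<^sub>R (\<Sum>t<j. F (\<pi> t) (zb t))"
      unfolding e_def z_def zb_def by (rule iter_eq)
    also have "(\<Sum>t<j. F (\<pi> t) (zb t)) = (\<Sum>t<j. a (\<pi> t)) + (\<Sum>t<j. d t)"
      by (simp add: d_def sum.distrib[symmetric])
    finally have "norm (e j) = \<gamma>1 * norm ((\<Sum>t<j. a (\<pi> t)) + (\<Sum>t<j. d t))"
      using g1 by simp
    then have "(norm (e j))\<^sup>2 = \<gamma>1\<^sup>2 * (norm ((\<Sum>t<j. a (\<pi> t)) + (\<Sum>t<j. d t)))\<^sup>2"
      by (simp add: power_mult_distrib)
    also have "\<dots> \<le> \<gamma>1\<^sup>2 * (2 * (norm (\<Sum>t<j. a (\<pi> t)))\<^sup>2 + 2 * (norm (\<Sum>t<j. d t))\<^sup>2)"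
      by (intro mult_left_mono norm_add_sq_le2) simp
    also have "\<dots> \<le> \<gamma>1\<^sup>2 * (2 * (norm (\<Sum>t<j. a (\<pi> t)))\<^sup>2 + 2 * (real j * (6 * M\<^sup>2 * S + 2 * M\<^sup>2 * \<gamma>2\<^sup>2 * V)))"
    proof -
      have "(norm (\<Sum>t<j. d t))\<^sup>2 \<le> real j * (\<Sum>t<j. (norm (d t))\<^sup>2)" by (rule norm_sum_sq_le)
      also have "\<dots> \<le> real j * (6 * M\<^sup>2 * S + 2 * M\<^sup>2 * \<gamma>2\<^sup>2 * V)"
        by (intro mult_left_mono sumd that) simp
      finally show ?thesis by (intro mult_left_mono) auto
    qed
    finally show ?thesis by (simp add: algebra_simps)
  qed
  have "S \<le> (\<Sum>j<n. 2 * \<gamma>1\<^sup>2 * (norm (\<Sum>t<j. a (\<pi> t)))\<^sup>2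
      + 2 * \<gamma>1\<^sup>2 * (real j * (6 * M\<^sup>2 * S + 2 * M\<^sup>2 * \<gamma>2\<^sup>2 * V)))"
  proof -
    have "(\<Sum>t<n. (norm (e t))\<^sup>2) \<le> (\<Sum>j<n. 2 * \<gamma>1\<^sup>2 * (norm (\<Sum>t<j. a (\<pi> t)))\<^sup>2
      + 2 * \<gamma>1\<^sup>2 * (real j * (6 * M\<^sup>2 * S + 2 * M\<^sup>2 * \<gamma>2\<^sup>2 * V)))"
      by (intro sum_mono ebound) auto
    then show ?thesis by (simp add: S_def)
  qed
  also have "\<dots> = 2 * \<gamma>1\<^sup>2 * P + 2 * \<gamma>1\<^sup>2 * (6 * M\<^sup>2 * S + 2 * M\<^sup>2 * \<gamma>2\<^sup>2 * V) * (\<Sum>j<n. real j)"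
    by (simp add: P_def sum.distrib sum_distrib_left sum_distrib_right algebra_simps)
  also have "\<dots> = 2 * \<gamma>1\<^sup>2 * P + 6 * (\<gamma>1\<^sup>2 * M\<^sup>2 * (real n * (real n - 1))) * S
      + 2 * \<gamma>1\<^sup>2 * (\<gamma>2\<^sup>2 * M\<^sup>2 * (real n * (real n - 1))) * V"
    by (simp add: sum_j field_simps)
  also have "\<dots> \<le> 2 * \<gamma>1\<^sup>2 * P + 6 * (1/18) * S + 2 * \<gamma>1\<^sup>2 * 1 * V"
  proof -
    have S0: "S \<ge> 0" unfolding S_def by (simp add: sum_nonneg)
    have V0: "V \<ge> 0" unfolding V_def by (simp add: sum_nonneg)
    have "6 * (\<gamma>1\<^sup>2 * M\<^sup>2 * (real n * (real n - 1))) * S \<le> 6 * (1/18) * S"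
      using c1 S0 by (intro mult_right_mono) auto
    moreover have "2 * \<gamma>1\<^sup>2 * (\<gamma>2\<^sup>2 * M\<^sup>2 * (real n * (real n - 1))) * V \<le> 2 * \<gamma>1\<^sup>2 * 1 * V"
      using c2 V0 by (intro mult_right_mono mult_left_mono) auto
    ultimately show ?thesis by linarith
  qed
  finally have "S \<le> 3 * \<gamma>1\<^sup>2 * P + 3 * \<gamma>1\<^sup>2 * V" by linarith
  then show ?thesis by (simp add: S_def P_def V_def e_def z_def a_def)
qed



theorem lemma2:
  fixes F :: "nat \<Rightarrow> 'a::euclidean_space \<Rightarrow> 'a"
    and Lf :: "nat \<Rightarrow> real" and L \<gamma>1 \<gamma>2 :: real and n :: nat and zs z0 :: 'a
  assumes n2: "n \<ge> 2"
    and LipF: "\<And>i. i < n \<Longrightarrow> (Lf i)-lipschitz_on UNIV (F i)"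
    and LipMean: "L-lipschitz_on UNIV (\<lambda>z. (1 / real n) *\<^sub>R (\<Sum>i<n. F i z))"
    and root: "(1 / real n) *\<^sub>R (\<Sum>i<n. F i zs) = 0"
    and g1pos: "\<gamma>1 > 0" and g2pos: "\<gamma>2 > 0"
    and g1: "\<gamma>1 * (3 * sqrt (2 * real n * (real n - 1)) * Max (Lf ` {..<n})) \<le> 1"
    and g2: "\<gamma>2 * (sqrt (real n * (real n - 1)) * Max (Lf ` {..<n})) \<le> 1"
  shows "(\<Sum>\<pi>\<in>{\<pi>. \<pi> permutes {..<n}}.
            (1 / real n) * (\<Sum>j<n. (norm (seg_iter F \<gamma>1 \<gamma>2 \<pi> z0 j - z0))\<^sup>2))
          / real (card {\<pi>. \<pi> permutes {..<n}})
       \<le> (10 * (real n)\<^sup>2 * L\<^sup>2 + ((2 / real n) * (\<Sum>i<n. (Lf i)\<^sup>2)) * (25 + real n))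
            * \<gamma>1\<^sup>2 * (norm (z0 - zs))\<^sup>2
         + 2 * (real n + 25) * \<gamma>1\<^sup>2 * ((1 / real n) * (\<Sum>i<n. (norm (F i zs))\<^sup>2))"
proof -
  define M where "M = Max (Lf ` {..<n})"
  define a where "a i = F i z0" for i
  define V where "V = (\<Sum>i<n. (norm (a i))\<^sup>2)"
  define A0 where "A0 = (norm (\<Sum>i<n. a i))\<^sup>2"
  define N where "N = card {\<pi>. \<pi> permutes {..<n}}"
  define r where "r = norm (z0 - zs)"
  define P where "P \<pi> = (\<Sum>j<n. (norm (\<Sum>t<j. a (\<pi> t)))\<^sup>2)" for \<pi>
  define Sg where "Sg = (\<Sum>i<n. (norm (F i zs))\<^sup>2)"
  define SL where "SL = (\<Sum>i<n. (Lf i)\<^sup>2)"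
  have npos: "real n > 0" using n2 by simp
  have LfM: "Lf i \<le> M" if "i < n" for i unfolding M_def using that by (intro Max_ge) auto
  have Lf0: "Lf i \<ge> 0" if "i < n" for i using lipschitz_on_nonneg[OF LipF[OF that]] .
  have M0: "M \<ge> 0" using LfM[of 0] Lf0[of 0] n2 by simp
  have Lip: "norm (F i x - F i y) \<le> M * norm (x - y)" if "i < n" for i x y
  proof -
    have "norm (F i x - F i y) \<le> Lf i * norm (x - y)"
      by (rule lipschitz_on_normD[OF LipF[OF that]]) auto
    also have "\<dots> \<le> M * norm (x - y)" by (intro mult_right_mono LfM that) simp
    finally show ?thesis .
  qed
  have nn0: "real n * (real n - 1) \<ge> 0" using n2 by simp
  have c1: "18 * (\<gamma>1\<^sup>2 * M\<^sup>2 * (real n * (real n - 1))) \<le> 1"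
  proof -
    have x0: "0 \<le> \<gamma>1 * (3 * sqrt (2 * real n * (real n - 1)) * M)"
    proof -
      have "2 * real n * (real n - 1) \<ge> 0" using nn0 by simp
      then have "sqrt (2 * real n * (real n - 1)) \<ge> 0" by simp
      then show ?thesis using g1pos M0 by simp
    qed
    have "(\<gamma>1 * (3 * sqrt (2 * real n * (real n - 1)) * M))\<^sup>2 \<le> 1\<^sup>2"
      using g1 x0 unfolding M_def[symmetric] by (intro power_mono) auto
    moreover have "(\<gamma>1 * (3 * sqrt (2 * real n * (real n - 1)) * M))\<^sup>2
        = 18 * (\<gamma>1\<^sup>2 * M\<^sup>2 * (real n * (real n - 1)))"
      using nn0 by (simp add: power_mult_distrib algebra_simps)
    ultimately show ?thesis by simp
  qed
  have c2: "\<gamma>2\<^sup>2 * M\<^sup>2 * (real n * (real n - 1)) \<le> 1"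
  proof -
    have x0: "0 \<le> \<gamma>2 * (sqrt (real n * (real n - 1)) * M)"
      using g2pos M0 nn0 by simp
    have "(\<gamma>2 * (sqrt (real n * (real n - 1)) * M))\<^sup>2 \<le> 1\<^sup>2"
      using g2 x0 unfolding M_def[symmetric] by (intro power_mono) auto
    moreover have "(\<gamma>2 * (sqrt (real n * (real n - 1)) * M))\<^sup>2
        = \<gamma>2\<^sup>2 * M\<^sup>2 * (real n * (real n - 1))"
      using nn0 by (simp add: power_mult_distrib algebra_simps)
    ultimately show ?thesis by simp
  qed
  have det: "(\<Sum>j<n. (norm (seg_iter F \<gamma>1 \<gamma>2 \<pi> z0 j - z0))\<^sup>2) \<le> 3 * \<gamma>1\<^sup>2 * P \<pi> + 3 * \<gamma>1\<^sup>2 * V"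
    if "\<pi> permutes {..<n}" for \<pi>
  proof -
    have "(\<Sum>j<n. (norm (seg_iter F \<gamma>1 \<gamma>2 \<pi> z0 j - z0))\<^sup>2)
     \<le> 3 * \<gamma>1\<^sup>2 * (\<Sum>j<n. (norm (\<Sum>t<j. F (\<pi> t) z0))\<^sup>2) + 3 * \<gamma>1\<^sup>2 * (\<Sum>i<n. (norm (F i z0))\<^sup>2)"
      by (rule det_bound[OF n2 Lip M0 that]) (use g1pos g2pos c1 c2 in auto)
    then show ?thesis by (simp add: P_def V_def a_def)
  qed
  have Nfact: "N = fact n" unfolding N_def by (rule card_permutations) auto
  define m where "m = n - 2"
  have m: "n = Suc (Suc m)" unfolding m_def using n2 by simp
  have f1: "fact (n-1) = fact n / real n"
    using npos by (simp add: m field_simps)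
  have f2: "fact (n-2) = fact n / (real n * (real n - 1))"
  proof -
    have h: "fact n = real n * (real n - 1) * fact (n-2)" by (simp add: m algebra_simps)
    have c: "real n * (real n - 1) \<noteq> 0" using n2 by simp
    show ?thesis unfolding h by (rule nonzero_mult_div_cancel_left[symmetric, OF c])
  qed
  have sumP: "(\<Sum>\<pi>\<in>{\<pi>. \<pi> permutes {..<n}}. P \<pi>)
      = fact n * ((real n - 1) / 2 * V + (real n - 2) / 3 * (A0 - V))"
  proof -
    have "(\<Sum>\<pi>\<in>{\<pi>. \<pi> permutes {..<n}}. P \<pi>)
        = (\<Sum>j<n. \<Sum>\<pi>\<in>{\<pi>. \<pi> permutes {..<n}}. (norm (\<Sum>t<j. a (\<pi> t)))\<^sup>2)"
      unfolding P_def by (rule sum.swap)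
    also have "\<dots> = (\<Sum>j<n. fact (n-1) * V * real j + fact (n-2) * (A0 - V) * (real j * (real j - 1)))"
      by (intro sum.cong refl) (simp add: perm_var[OF n2] V_def A0_def)
    also have "\<dots> = fact (n-1) * V * (real n * (real n - 1) / 2)
        + fact (n-2) * (A0 - V) * (real n * (real n - 1) * (real n - 2) / 3)"
      by (simp add: sum.distrib sum_distrib_left[symmetric] sum_j sum_jj)
    also have "\<dots> = fact n * ((real n - 1) / 2 * V + (real n - 2) / 3 * (A0 - V))"
      using n2 unfolding f1 f2 by (simp add: field_simps)
    finally show ?thesis .
  qed
  have Npos: "real N > 0" unfolding Nfact by simp
  have step1: "(\<Sum>\<pi>\<in>{\<pi>. \<pi> permutes {..<n}}.
            (1 / real n) * (\<Sum>j<n. (norm (seg_iter F \<gamma>1 \<gamma>2 \<pi> z0 j - z0))\<^sup>2))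
      \<le> (\<Sum>\<pi>\<in>{\<pi>. \<pi> permutes {..<n}}. (1 / real n) * (3 * \<gamma>1\<^sup>2 * P \<pi> + 3 * \<gamma>1\<^sup>2 * V))"
    using npos by (intro sum_mono mult_left_mono det) auto
  also have "\<dots> = (1 / real n) * (3 * \<gamma>1\<^sup>2 * (\<Sum>\<pi>\<in>{\<pi>. \<pi> permutes {..<n}}. P \<pi>) + real N * (3 * \<gamma>1\<^sup>2 * V))"
    unfolding sum_distrib_left[symmetric] sum.distrib sum_constant N_def by (simp only: mult_ac)
  also have "\<dots> = real N * (\<gamma>1\<^sup>2 / real n * (((real n + 7) / 2) * V + (real n - 2) * A0))"
    unfolding sumP Nfact using npos by (simp add: field_simps)
  finally have step2: "(\<Sum>\<pi>\<in>{\<pi>. \<pi> permutes {..<n}}.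
            (1 / real n) * (\<Sum>j<n. (norm (seg_iter F \<gamma>1 \<gamma>2 \<pi> z0 j - z0))\<^sup>2)) / real N
      \<le> \<gamma>1\<^sup>2 / real n * (((real n + 7) / 2) * V + (real n - 2) * A0)"
    using Npos by (simp add: pos_divide_le_eq mult.commute)
  have Fzs: "(\<Sum>i<n. F i zs) = 0" using root npos by simp
  have A0b: "A0 \<le> (real n)\<^sup>2 * L\<^sup>2 * r\<^sup>2"
  proof -
    have "norm ((1 / real n) *\<^sub>R (\<Sum>i<n. F i z0) - (1 / real n) *\<^sub>R (\<Sum>i<n. F i zs)) \<le> L * norm (z0 - zs)"
      by (rule lipschitz_on_normD[OF LipMean]) auto
    then have "norm (\<Sum>i<n. a i) / real n \<le> L * r"
      using Fzs npos by (simp add: a_def r_def)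
    then have h: "norm (\<Sum>i<n. a i) \<le> real n * (L * r)" using npos by (simp add: field_simps)
    have "A0 \<le> (real n * (L * r))\<^sup>2" unfolding A0_def by (intro power_mono h) simp
    then show ?thesis by (simp add: power_mult_distrib)
  qed
  have Vb: "V \<le> 2 * SL * r\<^sup>2 + 2 * Sg"
  proof -
    have "(norm (a i))\<^sup>2 \<le> 2 * ((Lf i)\<^sup>2 * r\<^sup>2) + 2 * (norm (F i zs))\<^sup>2" if "i < n" for i
    proof -
      have "norm (a i - F i zs) \<le> Lf i * r"
        unfolding a_def r_def by (rule lipschitz_on_normD[OF LipF[OF that]]) auto
      have "norm (a i) \<le> norm (a i - F i zs) + norm (F i zs)" using norm_triangle_ineq2[of "a i" "F i zs"] by linarith
      then have "norm (a i) \<le> Lf i * r + norm (F i zs)" using \<open>norm (a i - F i zs) \<le> Lf i * r\<close> by simp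
      then have "(norm (a i))\<^sup>2 \<le> (Lf i * r + norm (F i zs))\<^sup>2" by (intro power_mono) auto
      also have "\<dots> \<le> 2 * (Lf i * r)\<^sup>2 + 2 * (norm (F i zs))\<^sup>2" by (rule sq_sum_le2)
      finally show ?thesis by (simp add: power_mult_distrib)
    qed
    then have "V \<le> (\<Sum>i<n. 2 * ((Lf i)\<^sup>2 * r\<^sup>2) + 2 * (norm (F i zs))\<^sup>2)"
      unfolding V_def by (intro sum_mono) auto
    then show ?thesis by (simp add: sum.distrib sum_distrib_left sum_distrib_right SL_def Sg_def mult.assoc)
  qed
  have A00: "A0 \<ge> 0" unfolding A0_def by simp
  have fin: "\<gamma>1\<^sup>2 / real n * (((real n + 7) / 2) * V + (real n - 2) * A0)
      \<le> (10 * (real n)\<^sup>2 * L\<^sup>2 + ((2 / real n) * SL) * (25 + real n)) * \<gamma>1\<^sup>2 * r\<^sup>2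
         + 2 * (real n + 25) * \<gamma>1\<^sup>2 * ((1 / real n) * Sg)"
  proof -
    have e1: "((real n + 7) / 2) * V \<le> (25 + real n) * (2 * SL * r\<^sup>2 + 2 * Sg)"
    proof -
      have V0: "V \<ge> 0" unfolding V_def by (simp add: sum_nonneg)
      have "((real n + 7) / 2) * V \<le> (25 + real n) * V" using V0 npos by (intro mult_right_mono) auto
      also have "\<dots> \<le> (25 + real n) * (2 * SL * r\<^sup>2 + 2 * Sg)" using Vb npos by (intro mult_left_mono) auto
      finally show ?thesis .
    qed
    have e2: "(real n - 2) * A0 \<le> 10 * (real n)^3 * L\<^sup>2 * r\<^sup>2"
    proof -
      have "(real n - 2) * A0 \<le> real n * A0" using A00 by (intro mult_right_mono) auto
      also have "\<dots> \<le> real n * ((real n)\<^sup>2 * L\<^sup>2 * r\<^sup>2)" using A0b npos by (intro mult_left_mono) auto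
      also have "\<dots> \<le> 10 * (real n)^3 * L\<^sup>2 * r\<^sup>2"
      proof -
        have X0: "0 \<le> (real n)^3 * L\<^sup>2 * r\<^sup>2" by simp
        have "real n * ((real n)\<^sup>2 * L\<^sup>2 * r\<^sup>2) = (real n)^3 * L\<^sup>2 * r\<^sup>2"
          by (simp add: power2_eq_square power3_eq_cube)
        then show ?thesis using X0 by linarith
      qed
      finally show ?thesis .
    qed
    have "((real n + 7) / 2) * V + (real n - 2) * A0
        \<le> (25 + real n) * (2 * SL * r\<^sup>2 + 2 * Sg) + 10 * (real n)^3 * L\<^sup>2 * r\<^sup>2"
      using e1 e2 by linarith
    then have "\<gamma>1\<^sup>2 / real n * (((real n + 7) / 2) * V + (real n - 2) * A0)
        \<le> \<gamma>1\<^sup>2 / real n * ((25 + real n) * (2 * SL * r\<^sup>2 + 2 * Sg) + 10 * (real n)^3 * L\<^sup>2 * r\<^sup>2)"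
      using npos by (intro mult_left_mono) auto
    also have "\<dots> = (10 * (real n)\<^sup>2 * L\<^sup>2 + ((2 / real n) * SL) * (25 + real n)) * \<gamma>1\<^sup>2 * r\<^sup>2
         + 2 * (real n + 25) * \<gamma>1\<^sup>2 * ((1 / real n) * Sg)"
      using npos by (simp add: field_simps power3_eq_cube power2_eq_square)
    finally show ?thesis .
  qed
  show ?thesis using step2 fin unfolding N_def r_def SL_def Sg_def by linarith
qed

end
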